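(* Let $A_1,A_2\in\mathbb{R}_{\max}^{n\times n}$ with $A_2<CSR[A_1]$, and let $A=A_1\oplus A_2$. Then $\lambda(A)=\lambda(A_1)$, $\mathrm{crit}(A)=\mathrm{crit}(A_1)$, $CS^tR[A]=CS^tR[A_1]$ for all $t\ge1$, and $T_1(A)=T_1(A_1)$.
   Context: Max-plus semiring $\mathbb{R}_{\max}=\mathbb{R}\cup\{-\infty\}$ with $a\oplus b=\max(a,b)$, $a\otimes b=a+b$; $(A\oplus B)_{ij}=\max(a_{ij},b_{ij})$, $(AB)_{ij}=\max_k(a_{ik}+b_{kj})$; $A^t$ is the $t$-th max-plus power, $A^0=I$. $\mathcal{D}(A)$ is the digraph on $\{1,\dots,n\}$ with arc $(i,j)$ of weight $a_{ij}$ whenever $a_{ij}\ne-\infty$; walks, length (number of arcs), weight (sum of arc weights), cycles as usual. $\lambda(A)$ is the maximal cycle mean ($-\infty$ if no cycle). $\mathrm{crit}(A)$ is the subgraph of all nodes and arcs of cycles attaining $\lambda(A)$; its nodes are critical. The cyclicity of $\mathrm{crit}(A)$ is the lcm over its strongly connected components of the gcd of their cycle lengths. CSR terms: if $\lambda=\lambda(A)\ne-\infty$, with $\gamma$ the cyclicity of $\mathrm{crit}(A)$, $A_\lambda$ equal to $A$ with $\lambda$ subtracted from every finite entry, $M=I\oplus N\oplus\dots\oplus N^{n-1}$ where $N=A_\lambda^\gamma$: $c_{ij}=m_{ij}$ if $j$ critical, else $-\infty$; $r_{ij}=m_{ij}$ if $i$ critical, else $-\infty$; $s_{ij}=a_{ij}$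 if $(i,j)$ is an arc of $\mathrm{crit}(A)$, else $-\infty$; $CS^tR[A]$ is the product $CS^tR$ and $CSR[A]=CS^1R[A]$. If $\lambda(A)=-\infty$, $CS^tR[A]$ is the all-$(-\infty)$ matrix. $B_N$ has $(B_N)_{ij}=-\infty$ if $i$ or $j$ is critical and $a_{ij}$ otherwise. $T_1(A)$ is the least $T\ge0$ with $A^t=CS^tR[A]\oplus B_N^t$ for all $t\ge T$. Strict order: for matrices $X,Y$, $X<Y$ means $x_{ij}\le y_{ij}$ for all $i,j$, with $x_{ij}=y_{ij}$ only if both equal $-\infty$. *)

theory Defs
  imports "HOL-Library.Extended_Real"
begin

text \<open>Max-plus matrices of size n x n, indexed by a finite type 'n (n = CARD('n)),
  with entries in ereal; the max-plus semiring R_max is ereal without +infinity.\<close>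

type_synonym 'n mpmat = "'n \<Rightarrow> 'n \<Rightarrow> ereal"

definition rmax_mat :: "('n::finite) mpmat \<Rightarrow> bool" where
  "rmax_mat A \<longleftrightarrow> (\<forall>i j. A i j \<noteq> \<infinity>)"

definition mp_add :: "('n::finite) mpmat \<Rightarrow> 'n mpmat \<Rightarrow> 'n mpmat" where
  "mp_add A B = (\<lambda>i j. max (A i j) (B i j))"

definition mp_mult :: "('n::finite) mpmat \<Rightarrow> 'n mpmat \<Rightarrow> 'n mpmat" where
  "mp_mult A B = (\<lambda>i j. Max (range (\<lambda>k. A i k + B k j)))"

definition mp_one :: "('n::finite) mpmat" where
  "mp_one = (\<lambda>i j. if i = j then 0 else -\<infinity>)"

fun mp_pow :: "('n::finite) mpmat \<Rightarrow> nat \<Rightarrow> 'n mpmat" where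
  "mp_pow A 0 = mp_one"
| "mp_pow A (Suc t) = mp_mult (mp_pow A t) A"

definition mp_bot :: "('n::finite) mpmat" where
  "mp_bot = (\<lambda>i j. -\<infinity>)"

definition mp_strict_less :: "('n::finite) mpmat \<Rightarrow> 'n mpmat \<Rightarrow> bool" where
  "mp_strict_less X Y \<longleftrightarrow>
     (\<forall>i j. X i j \<le> Y i j \<and> (X i j = Y i j \<longrightarrow> X i j = -\<infinity>))"

definition arcs :: "('n::finite) mpmat \<Rightarrow> ('n \<times> 'n) set" where
  "arcs A = {(i, j). A i j \<noteq> -\<infinity>}"

definition cyc_arcs :: "'a list \<Rightarrow> ('a \<times> 'a) set" where
  "cyc_arcs c = {(c ! m, c ! (Suc m mod length c)) | m. m < length c}"

definition is_cycle_in :: "('a \<times> 'a) set \<Rightarrow> 'a list \<Rightarrow> bool" where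
  "is_cycle_in E c \<longleftrightarrow> c \<noteq> [] \<and> distinct c \<and> cyc_arcs c \<subseteq> E"

definition cycles :: "('n::finite) mpmat \<Rightarrow> 'n list set" where
  "cycles A = {c. is_cycle_in (arcs A) c}"

definition cyc_weight :: "('n::finite) mpmat \<Rightarrow> 'n list \<Rightarrow> ereal" where
  "cyc_weight A c = (\<Sum>m<length c. A (c ! m) (c ! (Suc m mod length c)))"

definition cyc_mean :: "('n::finite) mpmat \<Rightarrow> 'n list \<Rightarrow> ereal" where
  "cyc_mean A c = cyc_weight A c / ereal (real (length c))"

text \<open>Maximal cycle mean; Sup of the empty set is -infinity.\<close>
definition mcm :: "('n::finite) mpmat \<Rightarrow> ereal" where
  "mcm A = (SUP c \<in> cycles A. cyc_mean A c)"

definition crit_cycles :: "('n::finite) mpmat \<Rightarrow> 'n list set" where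
  "crit_cycles A = {c \<in> cycles A. cyc_mean A c = mcm A}"

definition crit_nodes :: "('n::finite) mpmat \<Rightarrow> 'n set" where
  "crit_nodes A = (\<Union>c \<in> crit_cycles A. set c)"

definition crit_arcs :: "('n::finite) mpmat \<Rightarrow> ('n \<times> 'n) set" where
  "crit_arcs A = (\<Union>c \<in> crit_cycles A. cyc_arcs c)"

definition crit :: "('n::finite) mpmat \<Rightarrow> 'n set \<times> ('n \<times> 'n) set" where
  "crit A = (crit_nodes A, crit_arcs A)"

definition crit_scc :: "('n::finite) mpmat \<Rightarrow> 'n \<Rightarrow> 'n set" where
  "crit_scc A i = {j \<in> crit_nodes A. (i, j) \<in> (crit_arcs A)\<^sup>* \<and> (j, i) \<in> (crit_arcs A)\<^sup>*}"

definition scc_gcd :: "('n::finite) mpmat \<Rightarrow> 'n \<Rightarrow> nat" where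
  "scc_gcd A i = Gcd {length c | c. is_cycle_in (crit_arcs A) c \<and> set c \<subseteq> crit_scc A i}"

definition cyclicity :: "('n::finite) mpmat \<Rightarrow> nat" where
  "cyclicity A = Lcm (scc_gcd A ` crit_nodes A)"

definition A_lam :: "('n::finite) mpmat \<Rightarrow> 'n mpmat" where
  "A_lam A = (\<lambda>i j. if A i j = -\<infinity> then -\<infinity> else A i j - mcm A)"

definition N_mat :: "('n::finite) mpmat \<Rightarrow> 'n mpmat" where
  "N_mat A = mp_pow (A_lam A) (cyclicity A)"

definition M_mat :: "('n::finite) mpmat \<Rightarrow> 'n mpmat" where
  "M_mat A = (\<lambda>i j. Max {mp_pow (N_mat A) k i j | k. k < card (UNIV :: 'n set)})"

definition C_mat :: "('n::finite) mpmat \<Rightarrow> 'n mpmat" where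
  "C_mat A = (\<lambda>i j. if j \<in> crit_nodes A then M_mat A i j else -\<infinity>)"

definition R_mat :: "('n::finite) mpmat \<Rightarrow> 'n mpmat" where
  "R_mat A = (\<lambda>i j. if i \<in> crit_nodes A then M_mat A i j else -\<infinity>)"

definition S_mat :: "('n::finite) mpmat \<Rightarrow> 'n mpmat" where
  "S_mat A = (\<lambda>i j. if (i, j) \<in> crit_arcs A then A i j else -\<infinity>)"

definition CStR :: "('n::finite) mpmat \<Rightarrow> nat \<Rightarrow> 'n mpmat" where
  "CStR A t = (if mcm A = -\<infinity> then mp_bot
               else mp_mult (mp_mult (C_mat A) (mp_pow (S_mat A) t)) (R_mat A))"

definition CSR :: "('n::finite) mpmat \<Rightarrow> 'n mpmat" where
  "CSR A = CStR A 1"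

definition B_N :: "('n::finite) mpmat \<Rightarrow> 'n mpmat" where
  "B_N A = (\<lambda>i j. if i \<in> crit_nodes A \<or> j \<in> crit_nodes A then -\<infinity> else A i j)"

definition T1 :: "('n::finite) mpmat \<Rightarrow> nat" where
  "T1 A = (LEAST T. \<forall>t\<ge>T. mp_pow A t = mp_add (CStR A t) (mp_pow (B_N A) t))"

end

theory Submission
  imports Defs
begin

definition wt :: "('n::finite) mpmat \<Rightarrow> nat \<Rightarrow> (nat \<Rightarrow> 'n) \<Rightarrow> ereal" where
  "wt X l p = (\<Sum>m<l. X (p m) (p (Suc m)))"

definition shift :: "nat \<Rightarrow> (nat \<Rightarrow> 'a) \<Rightarrow> nat \<Rightarrow> 'a" where
  "shift a p = (\<lambda>m. p (a + m))"

definition cat :: "nat \<Rightarrow> (nat \<Rightarrow> 'a) \<Rightarrow> (nat \<Rightarrow> 'a) \<Rightarrow> nat \<Rightarrow> 'a" where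
  "cat l p q = (\<lambda>m. if m \<le> l then p m else q (m - l))"

lemma minf_add[simp]: "(y::ereal) \<noteq> \<infinity> \<Longrightarrow> -\<infinity> + y = -\<infinity>"
  by (cases y) auto
lemma add_minf[simp]: "(y::ereal) \<noteq> \<infinity> \<Longrightarrow> y + -\<infinity> = -\<infinity>"
  by (cases y) auto

lemma wt_0[simp]: "wt X 0 p = 0" by (simp add: wt_def)
lemma wt_Suc: "wt X (Suc l) p = wt X l p + X (p l) (p (Suc l))"
  by (simp add: wt_def)

lemma wt_cong: "(\<And>m. m \<le> l \<Longrightarrow> p m = q m) \<Longrightarrow> wt X l p = wt X l q"
  unfolding wt_def by (rule sum.cong) auto

lemma wt_split: "wt X (a + b) p = wt X a p + wt X b (shift a p)"
proof (induction b)
  case 0 then show ?case by simp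
next
  case (Suc b)
  have "wt X (a + Suc b) p = wt X (a + b) p + X (p (a+b)) (p (Suc (a+b)))"
    by (simp add: wt_Suc)
  also have "\<dots> = wt X a p + wt X (Suc b) (shift a p)"
    using Suc by (simp add: wt_Suc shift_def add.assoc)
  finally show ?case .
qed

lemma shift_cat: "p l = q 0 \<Longrightarrow> shift l (cat l p q) = q"
  by (auto simp: shift_def cat_def)

lemma wt_cat: "p l = q 0 \<Longrightarrow> wt X (l + l2) (cat l p q) = wt X l p + wt X l2 q"
proof -
  assume h: "p l = q 0"
  have "wt X l (cat l p q) = wt X l p" by (rule wt_cong) (simp add: cat_def)
  then show ?thesis by (simp add: wt_split shift_cat[of p l q, OF h])
qed

lemma cat_0: "cat l p q 0 = p 0" by (simp add: cat_def)
lemma cat_end: "p l = q 0 \<Longrightarrow> cat l p q (l + l2) = q l2"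
  by (auto simp: cat_def)

lemma wt_mono: "(\<And>i j. X i j \<le> Y i j) \<Longrightarrow> wt X l p \<le> wt Y l p"
  unfolding wt_def by (rule sum_mono) auto

lemma wt_not_inf: "rmax_mat X \<Longrightarrow> wt X l p \<noteq> \<infinity>"
  unfolding wt_def rmax_mat_def by (simp add: sum_Pinfty)

lemma wt_minf: "rmax_mat X \<Longrightarrow> wt X l p = -\<infinity> \<longleftrightarrow> (\<exists>m<l. X (p m) (p (Suc m)) = -\<infinity>)"
proof (induction l)
  case 0 then show ?case by simp
next
  case (Suc l)
  then show ?case using wt_not_inf[OF Suc.prems, of l p] Suc.prems
    by (auto simp: wt_Suc rmax_mat_def less_Suc_eq)
qed

lemma pow_ge: "wt X l p \<le> mp_pow X l (p 0) (p l)"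
proof (induction l)
  case 0 then show ?case by (simp add: mp_one_def)
next
  case (Suc l)
  have "wt X (Suc l) p \<le> mp_pow X l (p 0) (p l) + X (p l) (p (Suc l))"
    using Suc by (simp add: wt_Suc add_right_mono)
  also have "\<dots> \<le> mp_pow X (Suc l) (p 0) (p (Suc l))"
    by (simp add: mp_mult_def)
  finally show ?case .
qed

lemma pow_not_inf: "rmax_mat X \<Longrightarrow> mp_pow X l i j \<noteq> \<infinity>"
proof (induction l arbitrary: j)
  case 0 then show ?case by (simp add: mp_one_def)
next
  case (Suc l)
  have "mp_pow X (Suc l) i j \<in> range (\<lambda>k. mp_pow X l i k + X k j)"
    unfolding mp_pow.simps mp_mult_def by (rule Max_in) auto
  then show ?case using Suc by (auto simp: rmax_mat_def)
qed

lemma pow_attained: "rmax_mat X \<Longrightarrow> mp_pow X l i j \<noteq> -\<infinity> \<Longrightarrow> \<exists>p. p 0 = i \<and> p l = j \<and> wt X l p = mp_pow X l i j"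
proof (induction l arbitrary: j)
  case 0 then show ?case by (intro exI[of _ "\<lambda>_. i"]) (auto simp: mp_one_def split: if_splits)
next
  case (Suc l)
  have "mp_pow X (Suc l) i j \<in> range (\<lambda>k. mp_pow X l i k + X k j)"
    unfolding mp_pow.simps mp_mult_def by (rule Max_in) auto
  then obtain k where k: "mp_pow X (Suc l) i j = mp_pow X l i k + X k j" by auto
  have "mp_pow X l i k \<noteq> -\<infinity>" using k Suc.prems by (auto simp: rmax_mat_def)
  then obtain p where p: "p 0 = i" "p l = k" "wt X l p = mp_pow X l i k" using Suc by blast
  define q where "q = p(Suc l := j)"
  have "wt X l q = wt X l p" by (rule wt_cong) (simp add: q_def)
  moreover have "q l = k" "q (Suc l) = j" "q 0 = i" using p by (auto simp: q_def)
  ultimately have "wt X (Suc l) q = mp_pow X (Suc l) i j"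
    using p k by (simp add: wt_Suc)
  then show ?case using \<open>q (Suc l) = j\<close> \<open>q 0 = i\<close> by blast
qed

lemma pow_mono: "rmax_mat X \<Longrightarrow> (\<And>i j. X i j \<le> Y i j) \<Longrightarrow> mp_pow X l i j \<le> mp_pow Y l i j"
proof (cases "mp_pow X l i j = -\<infinity>")
  case False
  assume h: "\<And>i j. X i j \<le> Y i j" and r: "rmax_mat X"
  obtain p where "p 0 = i" "p l = j" "wt X l p = mp_pow X l i j" using pow_attained[OF r False] by blast
  then show ?thesis using wt_mono[of X Y l p, OF h] pow_ge[of Y l p] by simp
qed simp

lemma pow_add: "rmax_mat X \<Longrightarrow> mp_pow X (a + b) i j = Max (range (\<lambda>k. mp_pow X a i k + mp_pow X b k j))"
proof (rule antisym)
  assume rm: "rmax_mat X"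
  show "mp_pow X (a + b) i j \<le> Max (range (\<lambda>k. mp_pow X a i k + mp_pow X b k j))"
  proof (cases "mp_pow X (a + b) i j = -\<infinity>")
  case False
  obtain r where r: "r 0 = i" "r (a+b) = j" "wt X (a+b) r = mp_pow X (a+b) i j"
    using pow_attained[OF rm False] by blast
  have "wt X (a+b) r \<le> mp_pow X a i (r a) + mp_pow X b (r a) j"
    unfolding wt_split using pow_ge[of X a r] pow_ge[of X b "shift a r"] r
    by (intro add_mono) (auto simp: shift_def)
  also have "\<dots> \<le> Max (range (\<lambda>k. mp_pow X a i k + mp_pow X b k j))" by simp
  finally show "mp_pow X (a + b) i j \<le> Max (range (\<lambda>k. mp_pow X a i k + mp_pow X b k j))"
    using r by simp
  qed simp
next
  assume rm: "rmax_mat X"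
  show "Max (range (\<lambda>k. mp_pow X a i k + mp_pow X b k j)) \<le> mp_pow X (a + b) i j"
  proof (rule Max.boundedI)
    show "finite (range (\<lambda>k. mp_pow X a i k + mp_pow X b k j))" by simp
    show "range (\<lambda>k. mp_pow X a i k + mp_pow X b k j) \<noteq> {}" by simp
    fix x assume "x \<in> range (\<lambda>k. mp_pow X a i k + mp_pow X b k j)"
    then obtain k where x: "x = mp_pow X a i k + mp_pow X b k j" by auto
    show "x \<le> mp_pow X (a+b) i j"
    proof (cases "mp_pow X a i k = -\<infinity> \<or> mp_pow X b k j = -\<infinity>")
      case True then show ?thesis using x pow_not_inf[OF rm] by auto
    next
      case False
    obtain p where p: "p 0 = i" "p a = k" "wt X a p = mp_pow X a i k" using pow_attained[OF rm] False by blast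
    obtain q where q: "q 0 = k" "q b = j" "wt X b q = mp_pow X b k j" using pow_attained[OF rm] False by blast
    have "wt X (a+b) (cat a p q) = x" using p q x by (simp add: wt_cat)
    moreover have "cat a p q 0 = i" "cat a p q (a+b) = j" using p q by (auto simp: cat_0 cat_end)
    ultimately show "x \<le> mp_pow X (a+b) i j" using pow_ge[of X "a+b" "cat a p q"] by simp
    qed
  qed
qed

lemma pow_pow: "rmax_mat X \<Longrightarrow> mp_pow (mp_pow X g) q = mp_pow X (g * q)"
proof (induction q)
  case 0 then show ?case by simp
next
  case (Suc q)
  have "mp_pow X (g * Suc q) = mp_pow X (g * q + g)" by (simp add: add.commute)
  then show ?case using Suc by (auto simp: mp_mult_def pow_add fun_eq_iff)
qed

lemma pow_one: "rmax_mat X \<Longrightarrow> mp_pow X 1 = X"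
proof (intro ext)
  assume rm: "rmax_mat X"
  fix i j
  have "mp_pow X 1 i j = Max (range (\<lambda>k. mp_one i k + X k j))" by (simp add: mp_mult_def)
  also have "\<dots> = X i j"
  proof (rule Max_eqI)
    fix y assume "y \<in> range (\<lambda>k. mp_one i k + X k j)"
    then show "y \<le> X i j" using rm by (auto simp: mp_one_def rmax_mat_def)
  next
    show "X i j \<in> range (\<lambda>k. mp_one i k + X k j)" by (rule image_eqI[of _ _ i]) (auto simp: mp_one_def)
  qed auto
  finally show "mp_pow X 1 i j = X i j" .
qed

definition Zm :: "('n::finite) mpmat \<Rightarrow> real \<Rightarrow> 'n mpmat" where
  "Zm X lam = (\<lambda>i j. X i j - ereal lam)"

lemma rmax_Zm: "rmax_mat X \<Longrightarrow> rmax_mat (Zm X lam)"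
  unfolding rmax_mat_def Zm_def
proof (intro allI)
  fix i j assume "\<forall>i j. X i j \<noteq> \<infinity>"
  then show "X i j - ereal lam \<noteq> \<infinity>" by (cases "X i j") auto
qed

lemma A_lam_Zm: "mcm X = ereal lam \<Longrightarrow> A_lam X = Zm X lam"
  unfolding A_lam_def Zm_def by (auto simp: fun_eq_iff)

lemma wt_Zm: "rmax_mat X \<Longrightarrow> wt X l p = wt (Zm X lam) l p + ereal (lam * l)"
proof (induction l)
  case 0 then show ?case by (simp add: zero_ereal_def)
next
  case (Suc l)
  have a: "X (p l) (p (Suc l)) \<noteq> \<infinity>" using Suc.prems by (auto simp: rmax_mat_def)
  have b: "wt (Zm X lam) l p \<noteq> \<infinity>" using wt_not_inf[OF rmax_Zm[OF Suc.prems]] by blast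
  show ?case using Suc a b
    by (cases "X (p l) (p (Suc l))"; cases "wt (Zm X lam) l p")
       (auto simp: wt_Suc Zm_def algebra_simps)
qed

lemma wt_Zm_le_iff: fixes lam :: real shows "rmax_mat X \<Longrightarrow> wt X l p \<le> ereal (lam * l) \<longleftrightarrow> wt (Zm X lam) l p \<le> 0"
  using wt_Zm[of X l p lam] wt_not_inf[OF rmax_Zm, of X lam l p]
  by (cases "wt (Zm X lam) l p") (auto simp: zero_ereal_def)

lemma wt_cut:
  assumes "a \<le> b" "b \<le> l" "p a = p b"
  shows "wt X l p = wt X (b - a) (shift a p) + wt X (a + (l - b)) (cat a p (shift b p))"
proof -
  have "wt X l p = wt X a p + wt X (b - a) (shift a p) + wt X (l - b) (shift b p)"
  proof -
    have "wt X l p = wt X (a + ((b - a) + (l - b))) p" using assms by simp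
    also have "\<dots> = wt X a p + (wt X (b - a) (shift a p) + wt X (l - b) (shift (b-a) (shift a p)))"
      by (simp add: wt_split)
    also have "shift (b-a) (shift a p) = shift b p" using assms by (auto simp: shift_def fun_eq_iff)
    finally show ?thesis by (simp add: add.assoc)
  qed
  moreover have "wt X (a + (l - b)) (cat a p (shift b p)) = wt X a p + wt X (l - b) (shift b p)"
    using assms wt_cat[of p a "shift b p" X "l - b"] by (simp add: shift_def)
  ultimately show ?thesis by (simp add: ac_simps)
qed

lemma finite_cycles: "finite (cycles (X::('n::finite) mpmat))"
proof -
  have "cycles X \<subseteq> {xs. set xs \<subseteq> UNIV \<and> distinct xs}"
    by (auto simp: cycles_def is_cycle_in_def)
  then show ?thesis using finite_subset_distinct[of "UNIV::'n set"] finite_subset by auto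
qed

lemma cyc_weight_wt: "cyc_weight X c = wt X (length c) (\<lambda>m. c ! (m mod length c))"
  unfolding cyc_weight_def wt_def by (rule sum.cong) auto

lemma cycle_arc: "c \<in> cycles X \<Longrightarrow> m < length c \<Longrightarrow> X (c ! m) (c ! (Suc m mod length c)) \<noteq> -\<infinity>"
  unfolding cycles_def is_cycle_in_def cyc_arcs_def arcs_def by auto

lemma cyc_weight_fin: "rmax_mat X \<Longrightarrow> c \<in> cycles X \<Longrightarrow> \<exists>w. cyc_weight X c = ereal w"
proof -
  assume r: "rmax_mat X" and c: "c \<in> cycles X"
  have "cyc_weight X c \<noteq> \<infinity>" using wt_not_inf[OF r] cyc_weight_wt by metis
  moreover have "cyc_weight X c \<noteq> -\<infinity>"
    unfolding cyc_weight_wt wt_minf[OF r] using cycle_arc[OF c]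
    by (metis c cycles_def is_cycle_in_def length_greater_0_conv mem_Collect_eq mod_less mod_less_divisor)
  ultimately show ?thesis by (cases "cyc_weight X c") auto
qed

lemma cyc_len_pos: "c \<in> cycles X \<Longrightarrow> length c > 0"
  by (auto simp: cycles_def is_cycle_in_def)

lemma cyc_mean_fin: "rmax_mat X \<Longrightarrow> c \<in> cycles X \<Longrightarrow> cyc_weight X c = ereal w \<Longrightarrow>
   cyc_mean X c = ereal (w / length c)"
  using cyc_len_pos[of c X] by (simp add: cyc_mean_def)

lemma cyc_mean_le: "rmax_mat X \<Longrightarrow> c \<in> cycles X \<Longrightarrow> cyc_mean X c \<le> ereal lam \<longleftrightarrow>
   cyc_weight X c \<le> ereal (lam * length c)"
proof -
  assume r: "rmax_mat X" and c: "c \<in> cycles X"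
  obtain w where w: "cyc_weight X c = ereal w" using cyc_weight_fin[OF r c] by blast
  have L: "real (length c) > 0" using cyc_len_pos[OF c] by simp
  show ?thesis using w cyc_mean_fin[OF r c w] L by (simp add: pos_divide_le_eq mult.commute)
qed

lemma cyc_mean_less: "rmax_mat X \<Longrightarrow> c \<in> cycles X \<Longrightarrow> cyc_mean X c < ereal lam \<longleftrightarrow>
   cyc_weight X c < ereal (lam * length c)"
proof -
  assume r: "rmax_mat X" and c: "c \<in> cycles X"
  obtain w where w: "cyc_weight X c = ereal w" using cyc_weight_fin[OF r c] by blast
  have L: "real (length c) > 0" using cyc_len_pos[OF c] by simp
  show ?thesis using w cyc_mean_fin[OF r c w] L by (simp add: pos_divide_less_eq mult.commute)
qed

lemma mcm_upper: "c \<in> cycles X \<Longrightarrow> cyc_mean X c \<le> mcm X"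
  unfolding mcm_def by (rule SUP_upper)

lemma closed_walk_cycle:
  assumes l: "l > 0" and inj: "inj_on p {..<l}" and cl: "p 0 = p l"
    and fin: "\<And>m. m < l \<Longrightarrow> X (p m) (p (Suc m)) \<noteq> -\<infinity>"
  shows "map p [0..<l] \<in> cycles X" and "cyc_weight X (map p [0..<l]) = wt X l p"
proof -
  let ?c = "map p [0..<l]"
  have e: "\<And>m. m < l \<Longrightarrow> ?c ! (Suc m mod l) = p (Suc m)"
  proof -
    fix m assume m: "m < l"
    show "?c ! (Suc m mod l) = p (Suc m)"
    proof (cases "Suc m = l")
      case True then show ?thesis using cl l by simp
    next
      case False then have "Suc m < l" using m by simp
      then show ?thesis by simp
    qed
  qed
  have "distinct ?c" using inj by (simp add: distinct_map atLeast0LessThan)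
  moreover have "cyc_arcs ?c \<subseteq> arcs X"
    using fin e by (auto simp: cyc_arcs_def arcs_def)
  ultimately show "?c \<in> cycles X" using l by (simp add: cycles_def is_cycle_in_def)
  show "cyc_weight X ?c = wt X l p"
    unfolding cyc_weight_def wt_def using e by (intro sum.cong) auto
qed

lemma closed_walk_le:
  assumes r: "rmax_mat X" and lam: "mcm X = ereal lam" and cl: "p 0 = p l"
  shows "wt (Zm X lam) l p \<le> 0"
  using cl
proof (induction l arbitrary: p rule: less_induct)
  case (less l)
  show ?case
  proof (cases "l = 0")
    case True then show ?thesis by simp
  next
    case l0: False
    show ?thesis
    proof (cases "inj_on p {..<l}")
      case True
      show ?thesis
      proof (cases "\<exists>m<l. X (p m) (p (Suc m)) = -\<infinity>")
        case True
        then have "wt X l p = -\<infinity>" using wt_minf[OF r] by blast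
        moreover have "wt X l p = wt (Zm X lam) l p + ereal (lam * l)" using wt_Zm[OF r] by blast
        ultimately have "wt (Zm X lam) l p = -\<infinity>" by simp
        then show ?thesis by simp
      next
        case False
        then have fin: "\<And>m. m < l \<Longrightarrow> X (p m) (p (Suc m)) \<noteq> -\<infinity>" by blast
        have l0': "l > 0" using l0 by simp
        note cw = closed_walk_cycle[of l p X, OF l0' True less.prems fin]
        have "cyc_mean X (map p [0..<l]) \<le> ereal lam" using mcm_upper[OF cw(1)] lam by simp
        then have "wt X l p \<le> ereal (lam * l)"
          using cyc_mean_le[OF r cw(1)] cw(2) by simp
        then show ?thesis using wt_Zm_le_iff[OF r] by blast
      qed
    next
      case False
      then obtain a b where ab: "a < l" "b < l" "a \<noteq> b" "p a = p b" unfolding inj_on_def by auto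
      obtain a' b' where ab': "a' < b'" "b' < l" "p a' = p b'"
      proof (cases "a < b")
        case True then show ?thesis using ab that by blast
      next
        case False then have "b < a" using ab by simp
        then show ?thesis using ab that[of b a] by simp
      qed
      let ?Z = "Zm X lam"
      have "wt ?Z l p = wt ?Z (b' - a') (shift a' p) + wt ?Z (a' + (l - b')) (cat a' p (shift b' p))"
        using ab' by (intro wt_cut) auto
      moreover have "wt ?Z (b' - a') (shift a' p) \<le> 0"
      proof (rule less.IH)
        show "b' - a' < l" using ab' by simp
        show "shift a' p 0 = shift a' p (b' - a')" using ab' by (simp add: shift_def)
      qed
      moreover have "wt ?Z (a' + (l - b')) (cat a' p (shift b' p)) \<le> 0"
      proof (rule less.IH)
        show "a' + (l - b') < l" using ab' by simp
        have "cat a' p (shift b' p) (a' + (l - b')) = p l"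
          using ab' less.prems by (simp add: cat_def shift_def)
        then show "cat a' p (shift b' p) 0 = cat a' p (shift b' p) (a' + (l - b'))"
          using less.prems by (simp add: cat_def)
      qed
      ultimately show ?thesis using add_mono[of "wt ?Z (b' - a') (shift a' p)" 0 "wt ?Z (a' + (l - b')) (cat a' p (shift b' p))" 0] by simp
    qed
  qed
qed

lemma walk_le_M:
  fixes Z :: "('n::finite) mpmat"
  assumes rZ: "rmax_mat Z" and g: "g > 0"
    and cw: "\<And>p l. p 0 = p l \<Longrightarrow> wt Z l p \<le> 0"
  shows "wt Z (g*q) p \<le> Max {mp_pow (mp_pow Z g) k (p 0) (p (g*q)) | k. k < card (UNIV::'n set)}"
proof (induction q arbitrary: p rule: less_induct)
  case (less q)
  let ?S = "\<lambda>i j. {mp_pow (mp_pow Z g) k i j | k. k < card (UNIV::'n set)}"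
  have fin: "\<And>i j. finite (?S i j)" by simp
  show ?case
  proof (cases "q < card (UNIV::'n set)")
    case True
    have "wt Z (g*q) p \<le> mp_pow Z (g*q) (p 0) (p (g*q))" by (rule pow_ge)
    also have "\<dots> = mp_pow (mp_pow Z g) q (p 0) (p (g*q))" using pow_pow[OF rZ] by simp
    also have "\<dots> \<le> Max (?S (p 0) (p (g*q)))" using True by (intro Max_ge[OF fin]) blast
    finally show ?thesis .
  next
    case False
    have "\<not> inj_on (\<lambda>m. p (g*m)) {0..q}"
    proof
      assume "inj_on (\<lambda>m. p (g*m)) {0..q}"
      then have "card {0..q} \<le> card (UNIV::'n set)" by (rule card_inj_on_le) auto
      then show False using False by simp
    qed
    then obtain a b where ab: "a \<le> q" "b \<le> q" "a \<noteq> b" "p (g*a) = p (g*b)"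
      unfolding inj_on_def by auto
    obtain a' b' where ab': "a' < b'" "b' \<le> q" "p (g*a') = p (g*b')"
    proof (cases "a < b")
      case True then show ?thesis using ab that by blast
    next
      case False then have "b < a" using ab by simp
      then show ?thesis using ab that[of b a] by simp
    qed
    have le: "g*a' \<le> g*b'" "g*b' \<le> g*q" using ab' by auto
    have "wt Z (g*q) p = wt Z (g*b' - g*a') (shift (g*a') p) + wt Z (g*a' + (g*q - g*b')) (cat (g*a') p (shift (g*b') p))"
      using le ab' by (intro wt_cut) auto
    moreover have "wt Z (g*b' - g*a') (shift (g*a') p) \<le> 0"
      using cw ab' le by (simp add: shift_def)
    moreover
    let ?p' = "cat (g*a') p (shift (g*b') p)"
    have len: "g*a' + (g*q - g*b') = g * (q - (b' - a'))" using ab'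
      by (simp add: diff_mult_distrib2 algebra_simps)
    have e0: "?p' 0 = p 0" by (simp add: cat_def)
    have e1: "?p' (g * (q - (b' - a'))) = p (g*q)"
    proof -
      have "?p' (g*a' + (g*q - g*b')) = shift (g*b') p (g*q - g*b')"
        using ab' by (intro cat_end) (simp add: shift_def)
      then show ?thesis using len le by (simp add: shift_def)
    qed
    have "wt Z (g * (q - (b' - a'))) ?p' \<le> Max (?S (?p' 0) (?p' (g * (q - (b' - a')))))"
      using ab' g by (intro less.IH) auto
    then have "wt Z (g*a' + (g*q - g*b')) ?p' \<le> Max (?S (p 0) (p (g*q)))"
      using len e0 e1 by simp
    ultimately show ?thesis
      using add_mono[of "wt Z (g*b' - g*a') (shift (g*a') p)" 0] by fastforce
  qed
qed

lemma crit_cycle_in: "c \<in> crit_cycles X \<Longrightarrow> c \<in> cycles X"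
  by (simp add: crit_cycles_def)

lemma crit_nodes_obtain:
  assumes "k \<in> crit_nodes X"
  obtains c r where "c \<in> crit_cycles X" "r < length c" "c ! r = k"
  using assms unfolding crit_nodes_def by (auto simp: in_set_conv_nth)

lemma cyc_reach:
  assumes "cyc_arcs c \<subseteq> E" "a < length c"
  shows "(c ! a, c ! ((a + d) mod length c)) \<in> E\<^sup>*"
proof (induction d)
  case 0 then show ?case using assms by simp
next
  case (Suc d)
  have L: "length c > 0" using assms by (cases c) auto
  have m: "(a + d) mod length c < length c" using L by simp
  have "(c ! ((a + d) mod length c), c ! (Suc ((a + d) mod length c) mod length c)) \<in> E"
    using assms(1) m unfolding cyc_arcs_def by blast
  moreover have "Suc ((a + d) mod length c) mod length c = (a + Suc d) mod length c"
    by (simp add: mod_Suc_eq)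
  ultimately show ?case using Suc by (metis rtrancl_into_rtrancl)
qed

lemma cyc_reach2:
  assumes "cyc_arcs c \<subseteq> E" "a < length c" "b < length c"
  shows "(c ! a, c ! b) \<in> E\<^sup>*"
proof -
  have "(a + (b + length c - a)) mod length c = b" using assms by simp
  then show ?thesis using cyc_reach[OF assms(1,2), of "b + length c - a"] by simp
qed

lemma crit_cycle_arcs: "c \<in> crit_cycles X \<Longrightarrow> cyc_arcs c \<subseteq> crit_arcs X"
  by (auto simp: crit_arcs_def)

lemma crit_cycle_nodes: "c \<in> crit_cycles X \<Longrightarrow> set c \<subseteq> crit_nodes X"
  by (auto simp: crit_nodes_def)

lemma g_pos: "cyclicity X > 0"
proof -
  have "scc_gcd X i \<noteq> 0" if i: "i \<in> crit_nodes X" for i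
  proof -
    obtain c r where c: "c \<in> crit_cycles X" "r < length c" "c ! r = i"
      using crit_nodes_obtain[OF i] by blast
    have "set c \<subseteq> crit_scc X i"
    proof
      fix j assume "j \<in> set c"
      then obtain b where b: "b < length c" "c ! b = j" by (auto simp: in_set_conv_nth)
      show "j \<in> crit_scc X i" unfolding crit_scc_def
        using cyc_reach2[OF crit_cycle_arcs[OF c(1)]] b c crit_cycle_nodes[OF c(1)] \<open>j \<in> set c\<close>
        by blast
    qed
    moreover have "is_cycle_in (crit_arcs X) c"
      using c crit_cycle_arcs[OF c(1)] crit_cycle_in[OF c(1)]
      by (auto simp: cycles_def is_cycle_in_def)
    ultimately have "length c \<in> {length c | c. is_cycle_in (crit_arcs X) c \<and> set c \<subseteq> crit_scc X i}"
      by blast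
    moreover have "length c \<noteq> 0" using c by (cases c) auto
    ultimately have "\<not> {length c | c. is_cycle_in (crit_arcs X) c \<and> set c \<subseteq> crit_scc X i} \<subseteq> {0}"
      by blast
    then show ?thesis unfolding scc_gcd_def by simp
  qed
  then have n0: "0 \<notin> scc_gcd X ` crit_nodes X" by force
  have fin: "finite (scc_gcd X ` crit_nodes X)" by simp
  have "Lcm (scc_gcd X ` crit_nodes X) \<noteq> 0" using Lcm_0_iff[OF fin] n0 by simp
  then show ?thesis unfolding cyclicity_def by (simp del: Lcm_0_iff_nat)
qed

definition cw :: "'a list \<Rightarrow> nat \<Rightarrow> nat \<Rightarrow> 'a" where
  "cw c r = (\<lambda>m. c ! ((r + m) mod length c))"

lemma cw_arc: "c \<noteq> [] \<Longrightarrow> (cw c r m, cw c r (Suc m)) \<in> cyc_arcs c"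
proof -
  assume c: "c \<noteq> []"
  have "(r + m) mod length c < length c" using c by simp
  moreover have "Suc ((r + m) mod length c) mod length c = (r + Suc m) mod length c"
    by (simp add: mod_Suc_eq)
  ultimately show ?thesis unfolding cw_def cyc_arcs_def by force
qed

lemma cw_node: "c \<noteq> [] \<Longrightarrow> cw c r m \<in> set c"
  unfolding cw_def by simp

lemma cw_period: "shift (length c * k) (cw c r) = cw c r"
  unfolding cw_def shift_def by (auto simp: fun_eq_iff add.left_commute[of r])

lemma cw_0: "r < length c \<Longrightarrow> cw c r 0 = c ! r" by (simp add: cw_def)

lemma cw_loop_end: "r < length c \<Longrightarrow> cw c r (length c * k) = c ! r"
  by (simp add: cw_def)

lemma Zm_minf: "Zm X lam i j = -\<infinity> \<longleftrightarrow> X i j = -\<infinity>"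
  unfolding Zm_def by (cases "X i j") auto

lemma cw_arc_fin: "c \<in> cycles X \<Longrightarrow> Zm X lam (cw c r m) (cw c r (Suc m)) \<noteq> -\<infinity>"
  using cw_arc[of c r m] unfolding Zm_minf
  by (auto simp: cycles_def is_cycle_in_def arcs_def)

lemma crit_cycle_Zweight:
  assumes r: "rmax_mat X" and lam: "mcm X = ereal lam" and c: "c \<in> crit_cycles X"
  shows "wt (Zm X lam) (length c) (cw c 0) = 0"
proof -
  have cc: "c \<in> cycles X" using c by (simp add: crit_cycles_def)
  obtain w where w: "cyc_weight X c = ereal w" using cyc_weight_fin[OF r cc] by blast
  have "cyc_mean X c = ereal lam" using c lam by (simp add: crit_cycles_def)
  then have "w / length c = lam" using cyc_mean_fin[OF r cc w] by simp
  then have wl: "w = lam * length c" using cyc_len_pos[OF cc] by (simp add: field_simps)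
  have base: "cw c 0 = (\<lambda>m. c ! (m mod length c))" by (simp add: cw_def)
  have "ereal (lam * length c) = wt (Zm X lam) (length c) (cw c 0) + ereal (lam * length c)"
    using w wl cyc_weight_wt[of X c] wt_Zm[OF r, of "length c" "cw c 0" lam] base by simp
  moreover have "wt (Zm X lam) (length c) (cw c 0) \<noteq> \<infinity>" using wt_not_inf[OF rmax_Zm[OF r]] by blast
  ultimately show ?thesis by (cases "wt (Zm X lam) (length c) (cw c 0)") (auto simp: zero_ereal_def)
qed

lemma cw_wt_fin:
  assumes r: "rmax_mat X" and c: "c \<in> cycles X"
  shows "wt (Zm X lam) l (cw c r) \<noteq> -\<infinity>" "wt (Zm X lam) l (cw c r) \<noteq> \<infinity>"
  using wt_minf[OF rmax_Zm[OF r]] cw_arc_fin[OF c] wt_not_inf[OF rmax_Zm[OF r]] by auto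

lemma cw_shift: "shift r (cw c 0) = cw c r"
  by (simp add: shift_def cw_def fun_eq_iff)

lemma crit_cycle_Zweight_r:
  assumes r: "rmax_mat X" and lam: "mcm X = ereal lam" and c: "c \<in> crit_cycles X"
  shows "wt (Zm X lam) (length c) (cw c r) = 0"
proof -
  let ?Z = "Zm X lam"
  have cc: "c \<in> cycles X" using c by (simp add: crit_cycles_def)
  have "wt ?Z (r + length c) (cw c 0) = wt ?Z r (cw c 0) + wt ?Z (length c) (cw c r)"
    by (simp add: wt_split cw_shift)
  moreover have "wt ?Z (length c + r) (cw c 0) = wt ?Z (length c) (cw c 0) + wt ?Z r (cw c 0)"
    using wt_split[of ?Z "length c" r "cw c 0"] cw_period[of c 1 0] by simp
  ultimately have "wt ?Z r (cw c 0) + wt ?Z (length c) (cw c r) = wt ?Z r (cw c 0) + 0"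
    using crit_cycle_Zweight[OF r lam c] by (simp add: add.commute)
  then show ?thesis
    using cw_wt_fin[OF r cc, of lam r 0] ereal_add_cancel_left by blast
qed

lemma crit_cycle_Zweight_k:
  assumes r: "rmax_mat X" and lam: "mcm X = ereal lam" and c: "c \<in> crit_cycles X"
  shows "wt (Zm X lam) (length c * k) (cw c r) = 0"
proof (induction k)
  case 0 then show ?case by simp
next
  case (Suc k)
  have "wt (Zm X lam) (length c * k + length c) (cw c r) = 0"
    unfolding wt_split cw_period Suc crit_cycle_Zweight_r[OF r lam c] by simp
  then show ?case by (simp add: add.commute)
qed

lemma dvd_aux:
  fixes g x s t L y l :: nat
  assumes g: "g > 0" and eq: "x + g*s + t = L*(g*y) + l" and md: "l mod g = t mod g"
  shows "g dvd x"
proof -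
  have "(x + t + g*s) mod g = (l + g*(L*y)) mod g" using eq by (simp add: ac_simps)
  then have "(x + t) mod g = l mod g" by simp
  then have "(x + t) mod g = t mod g" using md by simp
  then have "g dvd (x + t) - t" using mod_eq_dvd_iff_nat[of t "x + t" g] by simp
  then show ?thesis by simp
qed

lemma M_mat_eq: "mcm X = ereal lam \<Longrightarrow>
  M_mat X i j = Max {mp_pow (mp_pow (Zm X lam) (cyclicity X)) k i j | k. k < card (UNIV::'n set)}"
  for X :: "('n::finite) mpmat"
  by (simp add: M_mat_def N_mat_def A_lam_Zm)

lemma walk_le_M_X:
  fixes X :: "('n::finite) mpmat"
  assumes r: "rmax_mat X" and lam: "mcm X = ereal lam" and len: "l = cyclicity X * q"
  shows "wt (Zm X lam) l p \<le> M_mat X (p 0) (p l)"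
  unfolding M_mat_eq[OF lam] len
  by (rule walk_le_M[OF rmax_Zm[OF r] g_pos]) (rule closed_walk_le[OF r lam])

lemma CStR_ge:
  assumes "mcm X \<noteq> -\<infinity>"
  shows "C_mat X i k + mp_pow (S_mat X) t k l + R_mat X l j \<le> CStR X t i j"
proof -
  have "C_mat X i k + mp_pow (S_mat X) t k l \<le> mp_mult (C_mat X) (mp_pow (S_mat X) t) i l"
    unfolding mp_mult_def by simp
  then have "C_mat X i k + mp_pow (S_mat X) t k l + R_mat X l j \<le> mp_mult (C_mat X) (mp_pow (S_mat X) t) i l + R_mat X l j"
    by (rule add_right_mono)
  also have "\<dots> \<le> CStR X t i j" using assms unfolding CStR_def mp_mult_def by simp
  finally show ?thesis .
qed

lemma wt_S_crit:
  assumes "\<And>m. m < t \<Longrightarrow> (q m, q (Suc m)) \<in> crit_arcs X"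
  shows "wt (S_mat X) t q = wt X t q"
  unfolding wt_def S_mat_def using assms by (intro sum.cong) auto

lemma csr_bound:
  fixes X :: "('n::finite) mpmat"
  assumes r: "rmax_mat X" and lam: "mcm X = ereal lam" and kc: "p s \<in> crit_nodes X"
    and sl: "s \<le> l" and md: "l mod cyclicity X = t mod cyclicity X"
  shows "wt (Zm X lam) l p + ereal (lam * t) \<le> CStR X t (p 0) (p l)"
proof -
  let ?Z = "Zm X lam"
  define g where "g = cyclicity X"
  have g: "g > 0" using g_pos g_def by simp
  obtain c r0 where c: "c \<in> crit_cycles X" "r0 < length c" "c ! r0 = p s"
    using crit_nodes_obtain[OF kc] by blast
  have cc: "c \<in> cycles X" using c(1) by (simp add: crit_cycles_def)
  have cne: "c \<noteq> []" using c(2) by auto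
  define L where "L = length c"
  have L: "L > 0" using cne L_def by simp
  define q where "q = cw c r0"
  define d where "d = g*s - s"
  define M where "M = g*(d+t+1)"
  define e where "e = L*M - d - t"
  have gs: "g*s \<ge> s" using g by simp
  have sd: "s + d = g*s" using gs d_def by simp
  have "1 * (d+t+1) \<le> g * (d+t+1)" using g by (intro mult_le_mono1) simp
  then have "M \<ge> d + t + 1" unfolding M_def by simp
  moreover have "L*M \<ge> M" using L by simp
  ultimately have "d + t \<le> L*M" by linarith
  then have LM: "L*M = d + (t + e)" unfolding e_def by linarith
  have q0: "q 0 = p s" using c q_def by (simp add: cw_0)
  have qLM: "q (L*M) = p s" using c q_def L_def by (simp add: cw_loop_end)
  have qcrit: "\<And>m. q m \<in> crit_nodes X" using cw_node[OF cne] crit_cycle_nodes[OF c(1)] q_def by blast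
  have qarc: "\<And>m. (q m, q (Suc m)) \<in> crit_arcs X" using cw_arc[OF cne] crit_cycle_arcs[OF c(1)] q_def by blast
  define P1 where "P1 = cat s p q"
  have P1w: "wt ?Z (s + d) P1 = wt ?Z s p + wt ?Z d q" unfolding P1_def using q0 by (simp add: wt_cat)
  have P1e: "P1 0 = p 0" "P1 (s + d) = q d" unfolding P1_def using q0 by (auto simp: cat_0 cat_end)
  have B1: "wt ?Z s p + wt ?Z d q \<le> C_mat X (p 0) (q d)"
    using walk_le_M_X[OF r lam, of "s+d" s P1] sd g_def P1w P1e qcrit by (simp add: C_mat_def)
  define P3 where "P3 = cat e (shift (d+t) q) (shift s p)"
  have j3: "shift (d+t) q e = shift s p 0" using qLM LM by (simp add: shift_def add.assoc)
  have P3w: "wt ?Z (e + (l - s)) P3 = wt ?Z e (shift (d+t) q) + wt ?Z (l - s) (shift s p)"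
    unfolding P3_def using j3 by (simp add: wt_cat)
  have P3e: "P3 0 = q (d+t)" "P3 (e + (l - s)) = p l"
    unfolding P3_def using j3 sl cat_end[of "shift (d+t) q" e "shift s p" "l - s"]
    by (auto simp: cat_0 shift_def)
  have "g dvd e + (l - s)"
  proof (rule dvd_aux[OF g _ md[folded g_def]])
    show "e + (l - s) + g * s + t = L * (g * (d+t+1)) + l" using LM sd sl M_def by simp
  qed
  then obtain q3 where q3: "e + (l - s) = g * q3" by blast
  have B3: "wt ?Z e (shift (d+t) q) + wt ?Z (l - s) (shift s p) \<le> R_mat X (q (d+t)) (p l)"
    using walk_le_M_X[OF r lam, of "e + (l - s)" q3 P3] q3 g_def P3w P3e qcrit by (simp add: R_mat_def)
  have "wt (S_mat X) t (shift d q) = wt X t (shift d q)"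
    by (rule wt_S_crit) (simp add: shift_def qarc)
  then have B2: "wt ?Z t (shift d q) + ereal (lam * t) \<le> mp_pow (S_mat X) t (q d) (q (d+t))"
    using pow_ge[of "S_mat X" t "shift d q"] wt_Zm[OF r, of t "shift d q" lam] by (simp add: shift_def)
  have loop: "wt ?Z d q + (wt ?Z t (shift d q) + wt ?Z e (shift (d+t) q)) = 0"
  proof -
    have "wt ?Z (L*M) q = 0" unfolding q_def L_def by (rule crit_cycle_Zweight_k[OF r lam c(1)])
    moreover have "shift t (shift d q) = shift (d+t) q" by (simp add: shift_def fun_eq_iff ac_simps)
    ultimately show ?thesis unfolding LM wt_split by simp
  qed
  have wl: "wt ?Z l p = wt ?Z s p + wt ?Z (l - s) (shift s p)"
    using wt_split[of ?Z s "l - s" p] sl by simp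
  have "wt ?Z l p + ereal (lam * t) =
        (wt ?Z s p + wt ?Z d q) + (wt ?Z t (shift d q) + ereal (lam * t)) + (wt ?Z e (shift (d+t) q) + wt ?Z (l - s) (shift s p))"
  proof -
    have "(wt ?Z s p + wt ?Z d q) + (wt ?Z t (shift d q) + ereal (lam * t)) + (wt ?Z e (shift (d+t) q) + wt ?Z (l - s) (shift s p))
       = (wt ?Z s p + wt ?Z (l - s) (shift s p) + ereal (lam * t)) + (wt ?Z d q + (wt ?Z t (shift d q) + wt ?Z e (shift (d+t) q)))"
      by (simp add: ac_simps)
    then show ?thesis using loop wl by simp
  qed
  also have "\<dots> \<le> C_mat X (p 0) (q d) + mp_pow (S_mat X) t (q d) (q (d+t)) + R_mat X (q (d+t)) (p l)"
    using B1 B2 B3 by (intro add_mono) auto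
  also have "\<dots> \<le> CStR X t (p 0) (p l)" using lam by (intro CStR_ge) simp
  finally show ?thesis .
qed

lemma ereal_strict_aux:
  fixes a b c d :: ereal
  assumes "a \<noteq> -\<infinity>" "a \<noteq> \<infinity>" "a \<le> b" "c < d"
  shows "a + c < b + d"
  using assms by (cases a; cases b; cases c; cases d) auto

lemma ereal_strict_aux2:
  fixes a b c :: ereal
  assumes "c \<noteq> -\<infinity>" "c \<noteq> \<infinity>" "a < b"
  shows "a + c < b + c"
  using assms by (cases a; cases b; cases c) auto

locale mpset =
  fixes A1 A2 :: "('n::finite) mpmat" and lam :: real
  assumes r1: "rmax_mat A1" and r2: "rmax_mat A2" and sl: "mp_strict_less A2 (CSR A1)"
    and lam: "mcm A1 = ereal lam"
begin

abbreviation "A \<equiv> mp_add A1 A2"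
abbreviation "g \<equiv> cyclicity A1"
abbreviation "Z1 \<equiv> Zm A1 lam"
abbreviation "ZA \<equiv> Zm A lam"
definition bad :: "'n \<Rightarrow> 'n \<Rightarrow> bool" where
  "bad x y \<longleftrightarrow> A2 x y \<noteq> -\<infinity> \<and> A1 x y \<le> A2 x y"

lemma rA: "rmax_mat A" using r1 r2 by (simp add: rmax_mat_def mp_add_def max_def)

lemma A_ge: "A1 i j \<le> A i j" by (simp add: mp_add_def)

lemma not_bad: "\<not> bad x y \<Longrightarrow> A x y = A1 x y"
  by (auto simp: bad_def mp_add_def max_def)

lemma is_bad: "bad x y \<Longrightarrow> A x y = A2 x y"
  by (auto simp: bad_def mp_add_def max_def)

lemma Z_ge: "Z1 i j \<le> ZA i j"
  unfolding Zm_def using A_ge by (simp add: ereal_minus_mono)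

lemma rS: "rmax_mat (S_mat A1)" using r1 by (simp add: rmax_mat_def S_mat_def)

lemma card_pos: "\<exists>k. k < card (UNIV::'n set)"
  by (rule exI[of _ 0]) (simp add: card_gt_0_iff)

lemma M_not_inf: "M_mat A1 i j \<noteq> \<infinity>"
proof -
  have r: "rmax_mat (mp_pow (Zm A1 lam) (cyclicity A1))"
    using pow_not_inf[OF rmax_Zm[OF r1]] by (simp add: rmax_mat_def)
  have "M_mat A1 i j \<in> {mp_pow (mp_pow Z1 g) k i j | k. k < card (UNIV::'n set)}"
    unfolding M_mat_eq[OF lam] using card_pos by (intro Max_in) auto
  then obtain k where "M_mat A1 i j = mp_pow (mp_pow Z1 g) k i j" by blast
  then show ?thesis using pow_not_inf[OF r] by simp
qed

lemma M_attained:
  assumes "M_mat A1 i j \<noteq> -\<infinity>"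
  shows "\<exists>w q. w 0 = i \<and> w (g*q) = j \<and> wt Z1 (g*q) w = M_mat A1 i j"
proof -
  have "M_mat A1 i j \<in> {mp_pow (mp_pow Z1 g) k i j | k. k < card (UNIV::'n set)}"
    unfolding M_mat_eq[OF lam] using card_pos by (intro Max_in) auto
  then obtain k where k: "M_mat A1 i j = mp_pow Z1 (g*k) i j"
    using pow_pow[OF rmax_Zm[OF r1]] by auto
  then obtain w where "w 0 = i" "w (g*k) = j" "wt Z1 (g*k) w = M_mat A1 i j"
    using pow_attained[OF rmax_Zm[OF r1], where l="g*k" and i=i and j=j] assms k by auto
  then show ?thesis by blast
qed

lemma witness:
  assumes b: "A2 x y \<noteq> -\<infinity>"
  shows "\<exists>w len. w 0 = x \<and> w len = y \<and> len mod g = 1 mod g \<and>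
     A2 x y - ereal lam < wt Z1 len w \<and> (\<exists>s\<le>len. w s \<in> crit_nodes A1)"
proof -
  have lt1: "A2 x y \<le> CSR A1 x y" "A2 x y = CSR A1 x y \<longrightarrow> A2 x y = -\<infinity>"
    using sl unfolding mp_strict_less_def by blast+
  have lt: "A2 x y < CSR A1 x y"
  proof -
    have "A2 x y \<noteq> CSR A1 x y" using lt1(2) b by blast
    then show ?thesis using lt1(1) by simp
  qed
  have mf: "mcm A1 \<noteq> -\<infinity>" using lam by simp
  have csr: "CSR A1 x y = Max (range (\<lambda>l. Max (range (\<lambda>k. C_mat A1 x k + S_mat A1 k l)) + R_mat A1 l y))"
    using mf unfolding CSR_def CStR_def pow_one[OF rS] by (simp add: mp_mult_def)
  have "CSR A1 x y \<in> range (\<lambda>l. Max (range (\<lambda>k. C_mat A1 x k + S_mat A1 k l)) + R_mat A1 l y)"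
    unfolding csr by (rule Max_in) auto
  then obtain l where l: "CSR A1 x y = Max (range (\<lambda>k. C_mat A1 x k + S_mat A1 k l)) + R_mat A1 l y" by auto
  have "Max (range (\<lambda>k. C_mat A1 x k + S_mat A1 k l)) \<in> range (\<lambda>k. C_mat A1 x k + S_mat A1 k l)"
    by (rule Max_in) auto
  then obtain k where "Max (range (\<lambda>k. C_mat A1 x k + S_mat A1 k l)) = C_mat A1 x k + S_mat A1 k l"
    by blast
  then have k: "CSR A1 x y = C_mat A1 x k + S_mat A1 k l + R_mat A1 l y" using l by simp
  have Cni: "C_mat A1 x k \<noteq> \<infinity>" using M_not_inf by (simp add: C_mat_def)
  have Rni: "R_mat A1 l y \<noteq> \<infinity>" using M_not_inf by (simp add: R_mat_def)
  have Sni: "S_mat A1 k l \<noteq> \<infinity>" using rS by (simp add: rmax_mat_def)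
  have "CSR A1 x y \<noteq> -\<infinity>" using lt by auto
  then have fin: "C_mat A1 x k \<noteq> -\<infinity>" "S_mat A1 k l \<noteq> -\<infinity>" "R_mat A1 l y \<noteq> -\<infinity>"
    using k Cni Rni Sni by auto
  have kc: "k \<in> crit_nodes A1" and Cx: "C_mat A1 x k = M_mat A1 x k"
    using fin(1) by (auto simp: C_mat_def split: if_splits)
  have lc: "(k, l) \<in> crit_arcs A1" and Sx: "S_mat A1 k l = A1 k l"
    using fin(2) by (auto simp: S_mat_def split: if_splits)
  have Rl: "l \<in> crit_nodes A1" and Rx: "R_mat A1 l y = M_mat A1 l y"
    using fin(3) by (auto simp: R_mat_def split: if_splits)
  have f1: "M_mat A1 x k \<noteq> -\<infinity>" using fin(1) Cx by simp
  have f3: "M_mat A1 l y \<noteq> -\<infinity>" using fin(3) Rx by simp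
  obtain w1 q1 where w1: "w1 0 = x" "w1 (g*q1) = k" "wt Z1 (g*q1) w1 = M_mat A1 x k"
    using M_attained[OF f1] by blast
  obtain w3 q3 where w3: "w3 0 = l" "w3 (g*q3) = y" "wt Z1 (g*q3) w3 = M_mat A1 l y"
    using M_attained[OF f3] by blast
  define arc where "arc = (\<lambda>m::nat. if m = 0 then k else l)"
  define w2 where "w2 = cat 1 arc w3"
  have a1: "arc 1 = w3 0" "wt Z1 1 arc = Z1 k l" using w3 by (auto simp: arc_def wt_def)
  have w2: "w2 0 = k" "w2 (1 + g*q3) = y" "wt Z1 (1 + g*q3) w2 = Z1 k l + M_mat A1 l y"
    unfolding w2_def using w3 a1 wt_cat[of arc 1 w3 Z1 "g*q3"] cat_end[of arc 1 w3 "g*q3"]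
    by (auto simp: cat_0 arc_def)
  define w where "w = cat (g*q1) w1 w2"
  have we: "w 0 = x" "w (g*q1 + (1 + g*q3)) = y" "w (g*q1) = k"
    unfolding w_def using w1 w2 by (auto simp: cat_0 cat_end cat_def)
  have ww: "wt Z1 (g*q1 + (1 + g*q3)) w = M_mat A1 x k + (Z1 k l + M_mat A1 l y)"
    unfolding w_def using w1 w2 wt_cat[of w1 "g*q1" w2 Z1 "1 + g*q3"] by simp
  also have "\<dots> = CSR A1 x y - ereal lam"
  proof -
    obtain a where a: "M_mat A1 x k = ereal a" using f1 M_not_inf by (cases "M_mat A1 x k") auto
    obtain c where c: "M_mat A1 l y = ereal c" using f3 M_not_inf by (cases "M_mat A1 l y") auto
    obtain b where bb: "A1 k l = ereal b" using fin(2) Sni Sx by (cases "A1 k l") auto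
    show ?thesis unfolding k Cx Sx Rx a bb c Zm_def by simp
  qed
  finally have ww': "wt Z1 (g*q1 + (1 + g*q3)) w = CSR A1 x y - ereal lam" .
  have "A2 x y - ereal lam < CSR A1 x y - ereal lam"
    using lt b by (cases "A2 x y"; cases "CSR A1 x y") auto
  moreover have "(g*q1 + (1 + g*q3)) mod g = 1 mod g"
  proof -
    have "g*q1 + (1 + g*q3) = 1 + g*(q1+q3)" by (simp add: algebra_simps)
    then show ?thesis by (simp only: mod_mult_self2)
  qed
  moreover have "\<exists>s\<le>g*q1 + (1 + g*q3). w s \<in> crit_nodes A1" using we(3) kc by (intro exI[of _ "g*q1"]) simp
  ultimately show ?thesis using we(1,2) ww'
    by (intro exI[of _ w] exI[of _ "g*q1 + (1 + g*q3)"]) simp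
qed

lemma replace:
  "\<exists>q l'. q 0 = p 0 \<and> q l' = p l \<and> l' mod g = l mod g \<and> wt ZA l p \<le> wt Z1 l' q \<and>
     ((\<exists>m<l. bad (p m) (p (Suc m))) \<and> wt ZA l p \<noteq> -\<infinity> \<longrightarrow>
        wt ZA l p < wt Z1 l' q \<and> (\<exists>s\<le>l'. q s \<in> crit_nodes A1))"
proof (induction l)
  case 0 then show ?case by (intro exI[of _ p] exI[of _ 0]) simp
next
  case (Suc l)
  obtain q l' where IH: "q 0 = p 0" "q l' = p l" "l' mod g = l mod g" "wt ZA l p \<le> wt Z1 l' q"
    "(\<exists>m<l. bad (p m) (p (Suc m))) \<and> wt ZA l p \<noteq> -\<infinity> \<longrightarrow>
        wt ZA l p < wt Z1 l' q \<and> (\<exists>s\<le>l'. q s \<in> crit_nodes A1)" using Suc.IH by (elim exE conjE)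
  let ?x = "p l" and ?y = "p (Suc l)"
  have wS: "wt ZA (Suc l) p = wt ZA l p + ZA ?x ?y" by (simp add: wt_Suc)
  have rZA: "rmax_mat ZA" by (rule rmax_Zm[OF rA])
  have ni: "wt ZA l p \<noteq> \<infinity>" "ZA ?x ?y \<noteq> \<infinity>" using wt_not_inf[OF rZA] rZA by (auto simp: rmax_mat_def)
  show ?case
  proof (cases "bad ?x ?y")
    case False
    define arc where "arc = (\<lambda>m::nat. if m = 0 then ?x else ?y)"
    define q' where "q' = cat l' q arc"
    have zz: "ZA ?x ?y = Z1 ?x ?y" using not_bad[OF False] by (simp add: Zm_def)
    have "wt Z1 1 arc = Z1 ?x ?y" by (simp add: arc_def wt_def)
    then have q'w: "wt Z1 (l' + 1) q' = wt Z1 l' q + Z1 ?x ?y"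
      unfolding q'_def using IH(2) wt_cat[of q l' arc Z1 1] by (simp add: arc_def)
    have q'e: "q' 0 = p 0" "q' (l' + 1) = p (Suc l)"
      unfolding q'_def using IH by (auto simp: cat_0 cat_def arc_def)
    have le: "wt ZA (Suc l) p \<le> wt Z1 (l' + 1) q'"
      unfolding wS q'w zz using IH(4) by (rule add_right_mono)
    have md: "(l' + 1) mod g = Suc l mod g"
      using IH(3) mod_Suc_eq[of l' g] mod_Suc_eq[of l g] by simp
    have strict: "(\<exists>m<Suc l. bad (p m) (p (Suc m))) \<and> wt ZA (Suc l) p \<noteq> -\<infinity> \<longrightarrow>
        wt ZA (Suc l) p < wt Z1 (l'+1) q' \<and> (\<exists>s\<le>l'+1. q' s \<in> crit_nodes A1)"
    proof
      assume h: "(\<exists>m<Suc l. bad (p m) (p (Suc m))) \<and> wt ZA (Suc l) p \<noteq> -\<infinity>"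
      then obtain m where m: "m < Suc l" "bad (p m) (p (Suc m))" by blast
      then have "m \<noteq> l" using False by blast
      then have hb: "\<exists>m<l. bad (p m) (p (Suc m))" using m by (intro exI[of _ m]) simp
      have "wt ZA l p + ZA ?x ?y \<noteq> -\<infinity>" using h wS by simp
      then have f: "wt ZA l p \<noteq> -\<infinity>" "ZA ?x ?y \<noteq> -\<infinity>" using ni by simp_all
      then obtain s where s: "wt ZA l p < wt Z1 l' q" "s \<le> l'" "q s \<in> crit_nodes A1" using IH(5) hb by blast
      have "wt ZA (Suc l) p < wt Z1 (l' + 1) q'"
        unfolding wS q'w zz using ereal_strict_aux2[OF _ _ s(1)] f ni zz by simp
      moreover have "q' s = q s" using s by (simp add: q'_def cat_def)
      moreover have "s \<le> l' + 1" using s by simp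
      ultimately show "wt ZA (Suc l) p < wt Z1 (l'+1) q' \<and> (\<exists>s\<le>l'+1. q' s \<in> crit_nodes A1)"
        using s by (intro conjI exI[of _ s]) simp_all
    qed
    show ?thesis by (intro exI[of _ q'] exI[of _ "l' + 1"] conjI q'e md le strict)
  next
    case True
    have a2: "A2 ?x ?y \<noteq> -\<infinity>" using True by (simp add: bad_def)
    obtain w len where w: "w 0 = ?x" "w len = ?y" "len mod g = 1 mod g"
      "A2 ?x ?y - ereal lam < wt Z1 len w" "\<exists>s\<le>len. w s \<in> crit_nodes A1"
      using witness[OF a2] by blast
    define q' where "q' = cat l' q w"
    have zz: "ZA ?x ?y = A2 ?x ?y - ereal lam" using is_bad[OF True] by (simp add: Zm_def)
    have q'w: "wt Z1 (l' + len) q' = wt Z1 l' q + wt Z1 len w"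
      unfolding q'_def using IH(2) w by (simp add: wt_cat)
    have q'e: "q' 0 = p 0" "q' (l' + len) = p (Suc l)"
      unfolding q'_def using IH w by (auto simp: cat_0 cat_end)
    have le: "wt ZA (Suc l) p \<le> wt Z1 (l' + len) q'"
      unfolding wS q'w zz using IH(4) w(4) by (intro add_mono) auto
    have "(l' + len) mod g = (l' mod g + len mod g) mod g" by (simp add: mod_add_eq)
    also have "\<dots> = (l mod g + 1 mod g) mod g" using IH(3) w(3) by simp
    also have "\<dots> = (l + 1) mod g" by (rule mod_add_eq)
    also have "\<dots> = Suc l mod g" by simp
    finally have md: "(l' + len) mod g = Suc l mod g" .
    have strict: "(\<exists>m<Suc l. bad (p m) (p (Suc m))) \<and> wt ZA (Suc l) p \<noteq> -\<infinity> \<longrightarrow>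
        wt ZA (Suc l) p < wt Z1 (l'+len) q' \<and> (\<exists>s\<le>l'+len. q' s \<in> crit_nodes A1)"
    proof
      assume h: "(\<exists>m<Suc l. bad (p m) (p (Suc m))) \<and> wt ZA (Suc l) p \<noteq> -\<infinity>"
      have "wt ZA l p + ZA ?x ?y \<noteq> -\<infinity>" using h wS by simp
      then have f: "wt ZA l p \<noteq> -\<infinity>" using ni by simp
      have "wt ZA (Suc l) p < wt Z1 (l' + len) q'"
        unfolding wS q'w zz using ereal_strict_aux[OF f ni(1) IH(4) w(4)] .
      moreover obtain s where s: "s \<le> len" "w s \<in> crit_nodes A1" using w(5) by blast
      moreover have "q' (l' + s) = w s" unfolding q'_def using IH(2) w(1) by (simp add: cat_end)
      moreover have "l' + s \<le> l' + len" using s by simp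
      ultimately show "wt ZA (Suc l) p < wt Z1 (l'+len) q' \<and> (\<exists>s\<le>l'+len. q' s \<in> crit_nodes A1)"
        by (intro conjI exI[of _ "l' + s"]) simp_all
    qed
    show ?thesis by (intro exI[of _ q'] exI[of _ "l' + len"] conjI q'e md le strict)
  qed
qed

end

context mpset
begin

lemma cyc_arc_p:
  assumes "m < length c"
  shows "(\<lambda>m. c ! (m mod length c)) m = c ! m"
    "(\<lambda>m. c ! (m mod length c)) (Suc m) = c ! (Suc m mod length c)"
  using assms by auto

lemma cyc_cases:
  assumes c: "c \<in> cycles A"
  shows "(c \<in> cycles A1 \<and> cyc_weight A c = cyc_weight A1 c \<and>
          (\<forall>m<length c. \<not> bad (c!m) (c!(Suc m mod length c)))) \<or> cyc_mean A c < ereal lam"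
proof (cases "\<exists>m<length c. bad (c!m) (c!(Suc m mod length c))")
  case True
  define L where "L = length c"
  define p where "p = (\<lambda>m. c ! (m mod L))"
  have L: "L > 0" using cyc_len_pos[OF c] L_def by simp
  have hb: "\<exists>m<L. bad (p m) (p (Suc m))" using True unfolding p_def L_def by auto
  have cw: "cyc_weight A c = wt A L p" unfolding p_def L_def by (rule cyc_weight_wt)
  obtain w where w: "cyc_weight A c = ereal w" using cyc_weight_fin[OF rA c] by blast
  have wz: "wt A L p = wt ZA L p + ereal (lam * L)" by (rule wt_Zm[OF rA])
  have nm: "wt ZA L p \<noteq> -\<infinity>" using w cw wz by auto
  obtain q l' where q: "q 0 = p 0" "q l' = p L" "wt ZA L p < wt Z1 l' q"
    using replace[of p L] hb nm by blast
  have "q 0 = q l'" using q L by (simp add: p_def)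
  then have "wt Z1 l' q \<le> 0" by (rule closed_walk_le[OF r1 lam])
  then have "wt ZA L p < 0" using q(3) by simp
  then have "cyc_weight A c < ereal (lam * L)" using cw wz nm
    by (cases "wt ZA L p") auto
  then show ?thesis using cyc_mean_less[OF rA c] L_def by simp
next
  case False
  then have nb: "\<And>m. m < length c \<Longrightarrow> A (c!m) (c!(Suc m mod length c)) = A1 (c!m) (c!(Suc m mod length c))"
    using not_bad by blast
  have "c \<in> cycles A1"
    using c nb unfolding cycles_def is_cycle_in_def cyc_arcs_def arcs_def by auto
  moreover have "cyc_weight A c = cyc_weight A1 c"
    unfolding cyc_weight_def using nb by (intro sum.cong) auto
  ultimately show ?thesis using False by blast
qed

lemma arcs_sub: "arcs A1 \<subseteq> arcs A"
proof
  fix e assume "e \<in> arcs A1"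
  then obtain i j where e: "e = (i, j)" "A1 i j \<noteq> -\<infinity>" unfolding arcs_def by blast
  have "A i j \<noteq> -\<infinity>"
  proof
    assume "A i j = -\<infinity>" then have "A1 i j \<le> -\<infinity>" using A_ge[of i j] by simp
    then show False using e by simp
  qed
  then show "e \<in> arcs A" using e unfolding arcs_def by simp
qed

lemma cycles_sub: "c \<in> cycles A1 \<Longrightarrow> c \<in> cycles A"
  unfolding cycles_def is_cycle_in_def using arcs_sub by blast

lemma mean_mono: "c \<in> cycles A1 \<Longrightarrow> cyc_mean A1 c \<le> cyc_mean A c"
proof -
  assume c: "c \<in> cycles A1"
  have "cyc_weight A1 c \<le> cyc_weight A c" unfolding cyc_weight_def using A_ge by (intro sum_mono) auto
  moreover have "0 < ereal (real (length c))" using cyc_len_pos[OF c] by simp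
  ultimately show ?thesis unfolding cyc_mean_def by (rule ereal_divide_right_mono)
qed

lemma mcm_eq: "mcm A = ereal lam"
proof (rule antisym)
  show "mcm A \<le> ereal lam" unfolding mcm_def
  proof (rule SUP_least)
    fix c assume c: "c \<in> cycles A"
    show "cyc_mean A c \<le> ereal lam"
      using cyc_cases[OF c]
    proof
      assume h: "c \<in> cycles A1 \<and> cyc_weight A c = cyc_weight A1 c \<and> (\<forall>m<length c. \<not> bad (c!m) (c!(Suc m mod length c)))"
      then have "cyc_mean A c = cyc_mean A1 c" by (simp add: cyc_mean_def)
      also have "\<dots> \<le> mcm A1" using h mcm_upper by blast
      finally show ?thesis using lam by simp
    qed simp
  qed
  show "ereal lam \<le> mcm A" unfolding lam[symmetric] mcm_def[of A1]
  proof (rule SUP_least)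
    fix c assume c: "c \<in> cycles A1"
    show "cyc_mean A1 c \<le> mcm A" using mean_mono[OF c] mcm_upper[OF cycles_sub[OF c]] by simp
  qed
qed

lemma crit_cycles_eq: "crit_cycles A = crit_cycles A1"
proof
  show "crit_cycles A \<subseteq> crit_cycles A1"
  proof
    fix c assume c: "c \<in> crit_cycles A"
    then have cc: "c \<in> cycles A" and cm: "cyc_mean A c = ereal lam"
      using mcm_eq by (auto simp: crit_cycles_def)
    then have "c \<in> cycles A1 \<and> cyc_weight A c = cyc_weight A1 c" using cyc_cases[OF cc] by auto
    then show "c \<in> crit_cycles A1" using cm lam by (auto simp: crit_cycles_def cyc_mean_def)
  qed
next
  show "crit_cycles A1 \<subseteq> crit_cycles A"
  proof
    fix c assume c: "c \<in> crit_cycles A1"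
    then have cc: "c \<in> cycles A1" and cm: "cyc_mean A1 c = ereal lam"
      using lam by (auto simp: crit_cycles_def)
    have "cyc_mean A c \<le> ereal lam" using mcm_upper[OF cycles_sub[OF cc]] mcm_eq by simp
    moreover have "ereal lam \<le> cyc_mean A c" using mean_mono[OF cc] cm by simp
    ultimately show "c \<in> crit_cycles A" using cycles_sub[OF cc] mcm_eq
      by (auto simp: crit_cycles_def)
  qed
qed

lemma crit_nodes_eq: "crit_nodes A = crit_nodes A1"
  unfolding crit_nodes_def crit_cycles_eq ..

lemma crit_arcs_eq: "crit_arcs A = crit_arcs A1"
  unfolding crit_arcs_def crit_cycles_eq ..

lemma crit_eq: "crit A = crit A1"
  unfolding crit_def crit_nodes_eq crit_arcs_eq ..

lemma cyclicity_eq: "cyclicity A = cyclicity A1"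
  unfolding cyclicity_def scc_gcd_def crit_scc_def crit_nodes_eq crit_arcs_eq ..

lemma crit_arc_eq: "(x, y) \<in> crit_arcs A1 \<Longrightarrow> A x y = A1 x y"
proof -
  assume "(x, y) \<in> crit_arcs A1"
  then obtain c where c: "c \<in> crit_cycles A1" "(x, y) \<in> cyc_arcs c" unfolding crit_arcs_def by blast
  then obtain m where m: "m < length c" "x = c!m" "y = c!(Suc m mod length c)"
    unfolding cyc_arcs_def by blast
  have cA: "c \<in> crit_cycles A" using c crit_cycles_eq by simp
  then have cc: "c \<in> cycles A" and cm: "cyc_mean A c = ereal lam" using mcm_eq by (auto simp: crit_cycles_def)
  then have "\<forall>m<length c. \<not> bad (c!m) (c!(Suc m mod length c))" using cyc_cases[OF cc] by auto
  then show ?thesis using m not_bad by blast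
qed

lemma S_eq: "S_mat A = S_mat A1"
  unfolding S_mat_def crit_arcs_eq using crit_arc_eq by (auto simp: fun_eq_iff)

lemma M_eq: "M_mat A i j = M_mat A1 i j"
proof -
  let ?SA = "{mp_pow (mp_pow ZA g) k i j | k. k < card (UNIV::'n set)}"
  let ?S1 = "{mp_pow (mp_pow Z1 g) k i j | k. k < card (UNIV::'n set)}"
  have MA: "M_mat A i j = Max ?SA" using M_mat_eq[OF mcm_eq] cyclicity_eq by simp
  have M1: "M_mat A1 i j = Max ?S1" using M_mat_eq[OF lam] by simp
  have finA: "finite ?SA" "?SA \<noteq> {}" using card_pos by auto
  have fin1: "finite ?S1" "?S1 \<noteq> {}" using card_pos by auto
  show ?thesis
  proof (rule antisym)
    show "M_mat A i j \<le> M_mat A1 i j" unfolding MA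
    proof (rule Max.boundedI[OF finA])
      fix x assume "x \<in> ?SA"
      then obtain k where x: "x = mp_pow ZA (g*k) i j" using pow_pow[OF rmax_Zm[OF rA]] by auto
      show "x \<le> M_mat A1 i j"
      proof (cases "x = -\<infinity>")
        case False
        obtain p where p: "p 0 = i" "p (g*k) = j" "wt ZA (g*k) p = x"
          using pow_attained[OF rmax_Zm[OF rA], where l="g*k" and i=i and j=j] False x by auto
        obtain q l' where q: "q 0 = p 0" "q l' = p (g*k)" "l' mod g = (g*k) mod g" "wt ZA (g*k) p \<le> wt Z1 l' q"
          using replace[of p "g*k"] by blast
        have "l' = g * (l' div g)" using q(3) mult_div_mod_eq[of g l'] by simp
        then have "wt Z1 l' q \<le> M_mat A1 (q 0) (q l')" by (rule walk_le_M_X[OF r1 lam])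
        then show ?thesis using p q by simp
      qed simp
    qed
  next
    show "M_mat A1 i j \<le> M_mat A i j" unfolding M1
    proof (rule Max.boundedI[OF fin1])
      fix x assume "x \<in> ?S1"
      then obtain k where x: "x = mp_pow Z1 (g*k) i j" "k < card (UNIV::'n set)"
        using pow_pow[OF rmax_Zm[OF r1]] by auto
      have "x \<le> mp_pow ZA (g*k) i j" unfolding x using pow_mono[OF rmax_Zm[OF r1] Z_ge] by blast
      also have "\<dots> \<in> ?SA" using x pow_pow[OF rmax_Zm[OF rA]] by auto
      then have "mp_pow ZA (g*k) i j \<le> Max ?SA" using finA by simp
      finally show "x \<le> M_mat A i j" using MA by simp
    qed
  qed
qed

lemma CStR_eq: "CStR A t = CStR A1 t"
proof -
  have "C_mat A = C_mat A1" unfolding C_mat_def crit_nodes_eq using M_eq by (simp add: fun_eq_iff)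
  moreover have "R_mat A = R_mat A1" unfolding R_mat_def crit_nodes_eq using M_eq by (simp add: fun_eq_iff)
  ultimately show ?thesis unfolding CStR_def mcm_eq lam S_eq by simp
qed

end

context mpset
begin

abbreviation "B \<equiv> B_N A"
abbreviation "B1 \<equiv> B_N A1"

lemma B_def': "B x y = (if x \<in> crit_nodes A1 \<or> y \<in> crit_nodes A1 then -\<infinity> else A x y)"
  unfolding B_N_def crit_nodes_eq ..

lemma rB: "rmax_mat B" using rA unfolding rmax_mat_def B_def' by auto
lemma rB1: "rmax_mat B1" using r1 unfolding rmax_mat_def B_N_def by auto

lemma badwalk:
  assumes hb: "\<exists>m<t. bad (p m) (p (Suc m))" and nm: "wt A t p \<noteq> -\<infinity>"
  shows "wt A t p < CStR A1 t (p 0) (p t)"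
proof -
  have wz: "wt A t p = wt ZA t p + ereal (lam * t)" by (rule wt_Zm[OF rA])
  have nz: "wt ZA t p \<noteq> -\<infinity>" using nm wz by auto
  obtain q l' where q: "q 0 = p 0" "q l' = p t" "l' mod g = t mod g"
    "wt ZA t p < wt Z1 l' q" "\<exists>s\<le>l'. q s \<in> crit_nodes A1"
    using replace[of p t] hb nz by blast
  obtain s where s: "s \<le> l'" "q s \<in> crit_nodes A1" using q(5) by blast
  have "wt Z1 l' q + ereal (lam * t) \<le> CStR A1 t (q 0) (q l')"
    by (rule csr_bound[where X=A1 and lam=lam and p=q and s=s and l=l' and t=t, OF r1 lam s(2) s(1) q(3)])
  moreover have "wt ZA t p + ereal (lam * t) < wt Z1 l' q + ereal (lam * t)"
    by (rule ereal_strict_aux2[OF _ _ q(4)]) simp_all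
  ultimately show ?thesis using wz q by simp
qed

lemma powA_cases:
  "mp_pow A t i j = -\<infinity> \<or> mp_pow A t i j \<le> mp_pow A1 t i j \<or> mp_pow A t i j < CStR A1 t i j"
proof (cases "mp_pow A t i j = -\<infinity>")
  case False
  obtain p where p: "p 0 = i" "p t = j" "wt A t p = mp_pow A t i j"
    using pow_attained[OF rA, where l=t and i=i and j=j] False by auto
  show ?thesis
  proof (cases "\<exists>m<t. bad (p m) (p (Suc m))")
    case True
    then show ?thesis using badwalk[OF True] p False by simp
  next
    case nb: False
    have "wt A t p = wt A1 t p" unfolding wt_def using nb not_bad by (intro sum.cong) auto
    then show ?thesis using pow_ge[of A1 t p] p by simp
  qed
qed simp

lemma powB_cases:
  "mp_pow B t i j = -\<infinity> \<or> mp_pow B t i j \<le> mp_pow B1 t i j \<or> mp_pow B t i j < CStR A1 t i j"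
proof (cases "mp_pow B t i j = -\<infinity>")
  case False
  obtain p where p: "p 0 = i" "p t = j" "wt B t p = mp_pow B t i j"
    using pow_attained[OF rB, where l=t and i=i and j=j] False by auto
  show ?thesis
  proof (cases "\<exists>m<t. bad (p m) (p (Suc m))")
    case True
    have nm: "wt B t p \<noteq> -\<infinity>" using p False by simp
    then have "\<forall>m<t. B (p m) (p (Suc m)) \<noteq> -\<infinity>" using wt_minf[OF rB] by blast
    then have "wt B t p = wt A t p" unfolding wt_def by (intro sum.cong) (auto simp: B_def' split: if_splits)
    then show ?thesis using badwalk[OF True] p nm by simp
  next
    case nb: False
    have "wt B t p = wt B1 t p" unfolding wt_def using nb not_bad
      by (intro sum.cong) (auto simp: B_N_def crit_nodes_eq)
    then show ?thesis using pow_ge[of B1 t p] p by simp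
  qed
qed simp

lemma pred_eq:
  "(mp_pow A t = mp_add (CStR A t) (mp_pow B t)) \<longleftrightarrow>
   (mp_pow A1 t = mp_add (CStR A1 t) (mp_pow B1 t))"
proof -
  have ent: "(mp_pow A t i j = max (CStR A1 t i j) (mp_pow B t i j)) \<longleftrightarrow>
             (mp_pow A1 t i j = max (CStR A1 t i j) (mp_pow B1 t i j))" for i j
  proof -
    let ?a = "mp_pow A t i j" and ?a1 = "mp_pow A1 t i j" and ?b = "mp_pow B t i j"
      and ?b1 = "mp_pow B1 t i j" and ?k = "CStR A1 t i j"
    have h1: "?a1 \<le> ?a" using pow_mono[OF r1 A_ge] by blast
    have "\<And>x y. B1 x y \<le> B x y" unfolding B_N_def crit_nodes_eq using A_ge by auto
    then have h2: "?b1 \<le> ?b" using pow_mono[OF rB1] by blast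
    have "\<And>x y. B1 x y \<le> A1 x y" unfolding B_N_def by auto
    then have h3: "?b1 \<le> ?a1" using pow_mono[OF rB1] by blast
    have "\<And>x y. B x y \<le> A x y" unfolding B_N_def by auto
    then have h4: "?b \<le> ?a" using pow_mono[OF rB] by blast
    have ca: "?a = -\<infinity> \<or> ?a \<le> ?a1 \<or> ?a < ?k" by (rule powA_cases)
    have cb: "?b = -\<infinity> \<or> ?b \<le> ?b1 \<or> ?b < ?k" by (rule powB_cases)
    show ?thesis
    proof
      assume e: "?a = max ?k ?b"
      have le: "?a1 \<le> max ?k ?b1"
      proof -
        have m: "max ?k ?b \<le> max ?k ?b1" using cb by (auto simp: max_def)
        have "?a1 \<le> max ?k ?b" using h1 e by simp
        then show ?thesis using m by (rule order_trans)
      qed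
      have ge: "max ?k ?b1 \<le> ?a1"
      proof (cases "?k \<le> ?b1")
        case True then show ?thesis using h3 by (simp add: max_def)
      next
        case False
        then have kn: "?k \<noteq> -\<infinity>" by auto
        have "?k \<le> ?a" using e by simp
        then have "?k \<le> ?a1" using ca kn by auto
        then show ?thesis using h3 by simp
      qed
      show "?a1 = max ?k ?b1" using le ge by simp
    next
      assume e: "?a1 = max ?k ?b1"
      have ge: "max ?k ?b \<le> ?a" using e h1 h4 by simp
      have m2: "max ?k ?b1 \<le> max ?k ?b" using h2 by (auto simp: max_def)
      have le: "?a \<le> max ?k ?b"
      proof -
        { assume "?a \<le> ?a1" then have "?a \<le> max ?k ?b1" using e by simp
          then have ?thesis using m2 by (rule order_trans) }
        moreover { assume "?a < ?k" then have ?thesis by (simp add: less_imp_le le_max_iff_disj) }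
        moreover { assume "?a = -\<infinity>" then have ?thesis by simp }
        ultimately show ?thesis using ca by blast
      qed
      show "?a = max ?k ?b" using le ge by simp
    qed
  qed
  have l: "(mp_pow A t = mp_add (CStR A t) (mp_pow B t)) \<longleftrightarrow>
     (\<forall>i j. mp_pow A t i j = max (CStR A1 t i j) (mp_pow B t i j))"
    unfolding CStR_eq mp_add_def[of "CStR A1 t"] fun_eq_iff by simp
  have r: "(mp_pow A1 t = mp_add (CStR A1 t) (mp_pow B1 t)) \<longleftrightarrow>
     (\<forall>i j. mp_pow A1 t i j = max (CStR A1 t i j) (mp_pow B1 t i j))"
    unfolding mp_add_def[of "CStR A1 t"] fun_eq_iff by simp
  show ?thesis unfolding l r using ent by simp
qed

lemma T1_eq: "T1 A = T1 A1"
  unfolding T1_def by (simp only: pred_eq)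

end

lemma mcm_not_inf: "rmax_mat X \<Longrightarrow> mcm X \<noteq> \<infinity>"
proof -
  assume r: "rmax_mat X"
  show ?thesis
  proof (cases "cycles X = {}")
    case True then show ?thesis by (simp add: mcm_def bot_ereal_def)
  next
    case False
    have "mcm X = Max (cyc_mean X ` cycles X)" unfolding mcm_def
      using False finite_cycles by (intro cSup_eq_Max) auto
    also have "\<dots> \<in> cyc_mean X ` cycles X" using False finite_cycles by (intro Max_in) auto
    finally obtain c where c: "c \<in> cycles X" "mcm X = cyc_mean X c" by blast
    obtain w where "cyc_weight X c = ereal w" using cyc_weight_fin[OF r c(1)] by blast
    then show ?thesis using cyc_mean_fin[OF r c(1)] c by simp
  qed
qed

theorem lemmal:
  fixes A1 A2 :: "('n::finite) mpmat"
  assumes "rmax_mat A1" and "rmax_mat A2"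
    and "mp_strict_less A2 (CSR A1)"
  shows "mcm (mp_add A1 A2) = mcm A1
       \<and> crit (mp_add A1 A2) = crit A1
       \<and> (\<forall>t\<ge>1. CStR (mp_add A1 A2) t = CStR A1 t)
       \<and> T1 (mp_add A1 A2) = T1 A1"
proof (cases "mcm A1 = -\<infinity>")
  case True
  then have "CSR A1 = mp_bot" by (simp add: CSR_def CStR_def)
  then have "\<And>i j. A2 i j = -\<infinity>" using assms(3) by (simp add: mp_strict_less_def mp_bot_def)
  then have "mp_add A1 A2 = A1" by (simp add: mp_add_def fun_eq_iff)
  then show ?thesis by simp
next
  case False
  then obtain lam where lam: "mcm A1 = ereal lam" using mcm_not_inf[OF assms(1)] by (cases "mcm A1") auto
  interpret mpset A1 A2 lam using assms lam by unfold_locales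
  show ?thesis using mcm_eq lam crit_eq CStR_eq T1_eq by simp
qed

end
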